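(* Let $\xi$ be any boundary condition, $\sigma\in\Omega^\xi$ and $x\in F_{\mathrm{dec}}(\sigma)\cup F_{\mathrm{diag}}(\sigma)$. Let $\Delta_1=(\sigma_{y_1},\sigma_{z_1},\sigma_{w_1})$ and $\Delta_2=(\sigma_{y_2},\sigma_{z_2},\sigma_{w_2})$ be triangles of $\sigma$ with $|\sigma_{y_1}|>|\sigma_{z_1}|\ge|\sigma_{w_1}|$ and $|\sigma_{y_2}|>|\sigma_{z_2}|\ge|\sigma_{w_2}|$, such that for $i=1,2$ the midpoints $y_i,z_i,w_i$ belong to $\tau(\sigma,x)$ with $z_i,w_i$ children of $y_i$, and such that $y_1$ is an ancestor of $y_2$ in $\tau(\sigma,x)$. Then $|\sigma_{w_1}|\ge|\sigma_{w_2}|$.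
   Context: Let $P$ be a lattice polygon (a simple polygon whose vertices lie in $\mathbb{Z}^2$ and whose sides contain no points of $\mathbb{Z}^2$ other than their endpoints) and let $\Lambda^0$ be the set of points of $\mathbb{Z}^2$ in $P$ (including its boundary). Edges are open straight line segments with endpoints in $\Lambda^0$; $|e|$ denotes the $\ell_1$ length of an edge $e$. A triangulation of $\Lambda^0$ is a maximal collection of pairwise disjoint edges none of which contains a point of $\Lambda^0$; the set $\Lambda$ of midpoints of its edges does not depend on the triangulation, and $\sigma_x$ denotes the edge of $\sigma$ of midpoint $x$. A boundary condition $\xi$ is a set of pairwise disjoint edges containing no point of $\Lambda^0$ and containing all sides of $P$; $\Omega^\xi$ is the set of triangulations containing every edge of $\xi$. In each triangle of a triangulation there is a unique longest edge (in $\ell_1$ length). A unit diagonal is a diagonal of a unit square of $\mathbb{Z}^2$. $F_{\mathrm{dec}}(\sigma)$ is the set of $x\in\Lambda$ such that $\sigma_x$ is not a unit diagonal and is the longest edge of every triangle of $\sigma$ containing it; $F_{\mathrm{diag}}(\sigma)$ is the set of $x$ such that $\sigma_x$ is a unit diagonal and is the longest edge of every triangle of $\sigma$ containing it. Tree of influence: for $x\in F_{\mathrm{dec}}(\sigma)\cup F_{\mathrm{diag}}(\sigma)$ and a triangle $\Delta$ of $\sigma$ containing $\sigma_x$, the rooted structure $\tau^\Delta(\sigma,x)$ on midpoints is built as follows: its root is $x$ and the children of $x$ are the midpoints of the other two edges of $\Delta$; inductively, for a vertex $y$ with parent $z$, let $\Delta'$ be the triangle of $\sigma$ containing $\sigma_y$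 but not $\sigma_z$; if $\Delta'$ exists and $\sigma_y$ is its longest edge, the children of $y$ are the midpoints of the two other edges of $\Delta'$, otherwise $y$ has no children. $\tau(\sigma,x)$ is the union over the (one or two) triangles $\Delta$ containing $\sigma_x$ of $\tau^\Delta(\sigma,x)$, rooted at $x$ (it is a tree); ancestors refer to parent-to-child paths. *)

theory Defs
  imports "HOL-Analysis.Analysis"
begin

type_synonym lpt = "int \<times> int"

definition rp :: "lpt \<Rightarrow> real \<times> real" where
  "rp a = (real_of_int (fst a), real_of_int (snd a))"

text \<open>Polygon given by its cyclic list of vertices vs; side i joins vs!i and vs!((i+1) mod n).\<close>
definition pside :: "lpt list \<Rightarrow> nat \<Rightarrow> (real \<times> real) set" where
  "pside vs i = closed_segment (rp (vs ! i)) (rp (vs ! (Suc i mod length vs)))"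

definition lattice_polygon :: "lpt list \<Rightarrow> bool" where
  "lattice_polygon vs \<longleftrightarrow>
     length vs \<ge> 3 \<and> distinct vs \<and>
     (\<forall>i<length vs. \<forall>j<length vs. i \<noteq> j \<longrightarrow>
        pside vs i \<inter> pside vs j =
          (if j = Suc i mod length vs then {rp (vs ! j)}
           else if i = Suc j mod length vs then {rp (vs ! i)} else {})) \<and>
     (\<forall>i<length vs. \<forall>p. rp p \<in> pside vs i \<longrightarrow>
        p = vs ! i \<or> p = vs ! (Suc i mod length vs))"

definition pboundary :: "lpt list \<Rightarrow> (real \<times> real) set" where
  "pboundary vs = (\<Union>i<length vs. pside vs i)"

definition pregion :: "lpt list \<Rightarrow> (real \<times> real) set" where
  "pregion vs = pboundary vs \<union> inside (pboundary vs)"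

definition lattice_pts :: "lpt list \<Rightarrow> lpt set" where
  "lattice_pts vs = {p. rp p \<in> pregion vs}"

text \<open>Edges are represented by the (unordered) set of their two endpoints.\<close>
definition oseg :: "lpt set \<Rightarrow> (real \<times> real) set" where
  "oseg e = (THE S. \<exists>a b. e = {a, b} \<and> S = open_segment (rp a) (rp b))"

definition mid :: "lpt set \<Rightarrow> real \<times> real" where
  "mid e = (THE m. \<exists>a b. e = {a, b} \<and> m = midpoint (rp a) (rp b))"

definition l1len :: "lpt set \<Rightarrow> int" where
  "l1len e = (THE n. \<exists>a b. e = {a, b} \<and> n = \<bar>fst a - fst b\<bar> + \<bar>snd a - snd b\<bar>)"

definition unit_diag :: "lpt set \<Rightarrow> bool" where
  "unit_diag e \<longleftrightarrow> (\<exists>a b. e = {a, b} \<and> \<bar>fst a - fst b\<bar> = 1 \<and> \<bar>snd a - snd b\<bar> = 1)"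

definition valid_edge :: "lpt list \<Rightarrow> lpt set \<Rightarrow> bool" where
  "valid_edge vs e \<longleftrightarrow>
     (\<exists>a b. e = {a, b} \<and> a \<noteq> b \<and> a \<in> lattice_pts vs \<and> b \<in> lattice_pts vs) \<and>
     oseg e \<inter> rp ` lattice_pts vs = {} \<and> oseg e \<subseteq> pregion vs"

definition pairwise_disj :: "lpt set set \<Rightarrow> bool" where
  "pairwise_disj E \<longleftrightarrow> (\<forall>e\<in>E. \<forall>f\<in>E. e \<noteq> f \<longrightarrow> oseg e \<inter> oseg f = {})"

definition triangulation :: "lpt list \<Rightarrow> lpt set set \<Rightarrow> bool" where
  "triangulation vs \<sigma> \<longleftrightarrow>
     (\<forall>e\<in>\<sigma>. valid_edge vs e) \<and> pairwise_disj \<sigma> \<and>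
     (\<forall>e. valid_edge vs e \<and> e \<notin> \<sigma> \<longrightarrow> (\<exists>f\<in>\<sigma>. oseg e \<inter> oseg f \<noteq> {}))"

definition boundary_condition :: "lpt list \<Rightarrow> lpt set set \<Rightarrow> bool" where
  "boundary_condition vs \<xi> \<longleftrightarrow>
     (\<forall>e\<in>\<xi>. valid_edge vs e) \<and> pairwise_disj \<xi> \<and>
     (\<forall>i<length vs. {vs ! i, vs ! (Suc i mod length vs)} \<in> \<xi>)"

definition Omega :: "lpt list \<Rightarrow> lpt set set \<Rightarrow> lpt set set set" where
  "Omega vs \<xi> = {\<sigma>. triangulation vs \<sigma> \<and> \<xi> \<subseteq> \<sigma>}"

text \<open>A triangle (face) of \<sigma>, given as the set of its three edges: its three sides are in \<sigma>
  and its interior meets no edge of \<sigma> and no point of \<Lambda>^0.\<close>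
definition tri_of :: "lpt list \<Rightarrow> lpt set set \<Rightarrow> lpt set set \<Rightarrow> bool" where
  "tri_of vs \<sigma> T \<longleftrightarrow>
     (\<exists>a b c. T = {{a, b}, {b, c}, {a, c}} \<and> \<not> collinear {rp a, rp b, rp c} \<and> T \<subseteq> \<sigma> \<and>
        interior (convex hull {rp a, rp b, rp c}) \<inter>
          (rp ` lattice_pts vs \<union> \<Union> (oseg ` \<sigma>)) = {})"

definition longest :: "lpt set set \<Rightarrow> lpt set \<Rightarrow> bool" where
  "longest T e \<longleftrightarrow> e \<in> T \<and> (\<forall>f\<in>T. f \<noteq> e \<longrightarrow> l1len f < l1len e)"

definition edge_at :: "lpt set set \<Rightarrow> real \<times> real \<Rightarrow> lpt set" where
  "edge_at \<sigma> x = (THE e. e \<in> \<sigma> \<and> mid e = x)"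

definition F_dec :: "lpt list \<Rightarrow> lpt set set \<Rightarrow> (real \<times> real) set" where
  "F_dec vs \<sigma> = {x \<in> mid ` \<sigma>. \<not> unit_diag (edge_at \<sigma> x) \<and>
      (\<forall>T. tri_of vs \<sigma> T \<and> edge_at \<sigma> x \<in> T \<longrightarrow> longest T (edge_at \<sigma> x))}"

definition F_diag :: "lpt list \<Rightarrow> lpt set set \<Rightarrow> (real \<times> real) set" where
  "F_diag vs \<sigma> = {x \<in> mid ` \<sigma>. unit_diag (edge_at \<sigma> x) \<and>
      (\<forall>T. tri_of vs \<sigma> T \<and> edge_at \<sigma> x \<in> T \<longrightarrow> longest T (edge_at \<sigma> x))}"

text \<open>Parent-to-child relation of the tree of influence \<tau>(\<sigma>,x) (union over the triangles
  containing \<sigma>_x of \<tau>^\<Delta>(\<sigma>,x)).\<close>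
inductive_set infl :: "lpt list \<Rightarrow> lpt set set \<Rightarrow> real \<times> real
    \<Rightarrow> ((real \<times> real) \<times> (real \<times> real)) set"
  for vs \<sigma> x where
  root: "\<lbrakk>tri_of vs \<sigma> T; edge_at \<sigma> x \<in> T; f \<in> T; f \<noteq> edge_at \<sigma> x\<rbrakk>
           \<Longrightarrow> (x, mid f) \<in> infl vs \<sigma> x"
| step: "\<lbrakk>(z, y) \<in> infl vs \<sigma> x; tri_of vs \<sigma> T; edge_at \<sigma> y \<in> T; edge_at \<sigma> z \<notin> T;
           longest T (edge_at \<sigma> y); f \<in> T; f \<noteq> edge_at \<sigma> y\<rbrakk>
           \<Longrightarrow> (y, mid f) \<in> infl vs \<sigma> x"

definition infl_nodes :: "lpt list \<Rightarrow> lpt set set \<Rightarrow> real \<times> real \<Rightarrow> (real \<times> real) set" where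
  "infl_nodes vs \<sigma> x = insert x (Range (infl vs \<sigma> x))"

end

theory Submission
  imports Defs
begin

lemma rp_inj: "rp a = rp b \<longleftrightarrow> a = b"
  by (cases a; cases b) (simp add: rp_def)

lemma oseg_pair: "oseg {a,b} = open_segment (rp a) (rp b)"
  unfolding oseg_def
  by (rule the_equality, blast, auto simp: doubleton_eq_iff open_segment_commute)

lemma mid_pair: "mid {a,b} = midpoint (rp a) (rp b)"
  unfolding mid_def
  by (rule the_equality, blast, auto simp: doubleton_eq_iff midpoint_sym)

lemma l1_pair: "l1len {a,b} = \<bar>fst a - fst b\<bar> + \<bar>snd a - snd b\<bar>"
  unfolding l1len_def
  by (rule the_equality, blast, auto simp: doubleton_eq_iff abs_minus_commute)

lemma valid_edgeD:
  assumes "valid_edge vs {a,b}"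
  shows "a \<noteq> b" "a \<in> lattice_pts vs" "b \<in> lattice_pts vs"
    "open_segment (rp a) (rp b) \<inter> rp ` lattice_pts vs = {}"
    "open_segment (rp a) (rp b) \<subseteq> pregion vs"
  using assms unfolding valid_edge_def oseg_pair
  by (auto simp: doubleton_eq_iff)

lemma valid_edge_ex: "valid_edge vs e \<Longrightarrow> \<exists>a b. e = {a,b}"
  unfolding valid_edge_def by blast

lemma mid_inj:
  assumes "\<forall>e\<in>\<sigma>. valid_edge vs e" "pairwise_disj \<sigma>" "e \<in> \<sigma>" "f \<in> \<sigma>" "mid e = mid f"
  shows "e = f"
proof (rule ccontr)
  assume ne: "e \<noteq> f"
  obtain a b where e: "e = {a,b}" using assms(1,3) valid_edge_ex by blast
  obtain c d where f: "f = {c,d}" using assms(1,4) valid_edge_ex by blast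
  have v: "valid_edge vs {a,b}" "valid_edge vs {c,d}" using assms(1,3,4) e f by auto
  have ab: "a \<noteq> b" using valid_edgeD(1)[OF v(1)] .
  have cd: "c \<noteq> d" using valid_edgeD(1)[OF v(2)] .
  have m1: "mid e \<in> oseg e" unfolding e oseg_pair mid_pair using ab by (simp add: rp_inj)
  have m2: "mid f \<in> oseg f" unfolding f oseg_pair mid_pair using cd by (simp add: rp_inj)
  have "oseg e \<inter> oseg f = {}" using assms(2) assms(3,4) ne unfolding pairwise_disj_def by blast
  then show False using m1 m2 assms(5) by auto
qed

lemma edge_at_mid:
  assumes "\<forall>e\<in>\<sigma>. valid_edge vs e" "pairwise_disj \<sigma>" "f \<in> \<sigma>"
  shows "edge_at \<sigma> (mid f) = f"
  unfolding edge_at_def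
proof (rule the_equality)
  show "f \<in> \<sigma> \<and> mid f = mid f" using assms(3) by simp
  fix e assume "e \<in> \<sigma> \<and> mid e = mid f"
  then show "e = f" using mid_inj[OF assms(1,2)] assms(3) by blast
qed

definition dt :: "lpt \<Rightarrow> lpt \<Rightarrow> lpt \<Rightarrow> int" where
  "dt P Q R = (fst Q - fst P)*(snd R - snd P) - (snd Q - snd P)*(fst R - fst P)"

definition tri3 where
  "tri3 vs \<sigma> P Q R \<longleftrightarrow> \<not> collinear {rp P, rp Q, rp R} \<and> {{P,Q},{Q,R},{P,R}} \<subseteq> \<sigma> \<and>
        interior (convex hull {rp P, rp Q, rp R}) \<inter>
          (rp ` lattice_pts vs \<union> \<Union> (oseg ` \<sigma>)) = {}"

lemma set3_perm: "{a,b,c} = {b,a,c}" "{a,b,c} = {a,c,b}" "{a,b,c} = {c,b,a}" "{a,b} = {b,a}"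
  by blast+

lemma tri3_perm1: assumes "tri3 vs \<sigma> P Q R" shows "tri3 vs \<sigma> Q P R"
proof -
  have e1: "{rp Q, rp P, rp R} = {rp P, rp Q, rp R}" by (rule set3_perm)
  have e2: "{{Q,P},{P,R},{Q,R}} = {{P,Q},{Q,R},{P,R}}"
    using set3_perm(2)[of "{P,Q}" "{P,R}" "{Q,R}"] set3_perm(4)[of Q P] by simp
  show ?thesis using assms unfolding tri3_def e1 e2 .
qed

lemma tri3_perm2: assumes "tri3 vs \<sigma> P Q R" shows "tri3 vs \<sigma> P R Q"
proof -
  have e1: "{rp P, rp R, rp Q} = {rp P, rp Q, rp R}" by (rule set3_perm)
  have e2: "{{P,R},{R,Q},{P,Q}} = {{P,Q},{Q,R},{P,R}}"
    using set3_perm(3)[of "{P,R}" "{Q,R}" "{P,Q}"] set3_perm(4)[of R Q] by simp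
  show ?thesis using assms unfolding tri3_def e1 e2 .
qed

lemma tri_of_edge:
  assumes "tri_of vs \<sigma> T" "e \<in> T"
  shows "\<exists>P Q R. e = {P,Q} \<and> T = {{P,Q},{Q,R},{P,R}} \<and> tri3 vs \<sigma> P Q R"
proof -
  obtain a b c where T: "T = {{a, b}, {b, c}, {a, c}}" and t: "tri3 vs \<sigma> a b c"
  proof -
    from assms(1) obtain a b c where "T = {{a, b}, {b, c}, {a, c}}" "\<not> collinear {rp a, rp b, rp c}" "T \<subseteq> \<sigma>"
        "interior (convex hull {rp a, rp b, rp c}) \<inter> (rp ` lattice_pts vs \<union> \<Union> (oseg ` \<sigma>)) = {}"
      unfolding tri_of_def by metis
    then show ?thesis using that[of a b c] unfolding tri3_def by simp
  qed
  have "e = {a,b} \<or> e = {b,c} \<or> e = {a,c}" using assms(2) T by simp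
  then show ?thesis
  proof (elim disjE)
    assume "e = {a,b}" then show ?thesis using T t by (intro exI[of _ a] exI[of _ b] exI[of _ c]) simp
  next
    assume e: "e = {b,c}"
    have "T = {{b,c},{c,a},{b,a}}" using T set3_perm(4)[of a b] set3_perm(4)[of a c]
      set3_perm(3)[of "{b,c}" "{a,c}" "{a,b}"] set3_perm(2)[of "{b,c}" "{a,c}" "{a,b}"] set3_perm(1)[of "{b,a}" "{b,c}" "{c,a}"] by simp
    moreover have "tri3 vs \<sigma> b c a" using tri3_perm2[OF tri3_perm1[OF t]] .
    ultimately show ?thesis using e by (intro exI[of _ b] exI[of _ c] exI[of _ a]) simp
  next
    assume e: "e = {a,c}"
    have "T = {{a,c},{c,b},{a,b}}" using T set3_perm(4)[of b c]
      set3_perm(3)[of "{a,b}" "{b,c}" "{a,c}"] by simp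
    moreover have "tri3 vs \<sigma> a c b" using tri3_perm2[OF t] .
    ultimately show ?thesis using e by (intro exI[of _ a] exI[of _ c] exI[of _ b]) simp
  qed
qed

lemma dt_collinear:
  assumes "dt P Q R = 0" shows "collinear {rp P, rp Q, rp R}"
proof -
  define x where "x = rp P - rp Q" define y where "y = rp R - rp Q"
  have i: "(fst P - fst Q)*(snd R - snd Q) - (snd P - snd Q)*(fst R - fst Q) = - dt P Q R"
    unfolding dt_def by (simp add: algebra_simps)
  have "fst x * snd y - snd x * fst y = real_of_int ((fst P - fst Q)*(snd R - snd Q) - (snd P - snd Q)*(fst R - fst Q))"
    unfolding x_def y_def rp_def by simp
  then have d: "fst x * snd y - snd x * fst y = 0" using i assms by simp
  have "x = 0 \<or> y = 0 \<or> (\<exists>c. y = c *\<^sub>R x)"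
  proof (cases "x = 0")
    case False
    show ?thesis
    proof (cases "fst x = 0")
      case True
      then have "snd x \<noteq> 0" using False by (simp add: prod_eq_iff)
      then have "fst y = 0" using d True by simp
      then have "y = (snd y / snd x) *\<^sub>R x" using True \<open>snd x \<noteq> 0\<close> by (simp add: prod_eq_iff)
      then show ?thesis by blast
    next
      case f: False
      have "snd y = (fst y / fst x) * snd x" using d f by (simp add: field_simps)
      then have "y = (fst y / fst x) *\<^sub>R x" using f by (simp add: prod_eq_iff)
      then show ?thesis by blast
    qed
  qed simp
  then show ?thesis
    by (subst collinear_3) (auto simp: collinear_lemma x_def y_def)
qed

lemma interior_pt:
  fixes A B C :: "real \<times> real"
  assumes "\<not> collinear {A,B,C}" "0 < a" "0 < b" "a + b < 1"
  shows "A + a *\<^sub>R (B - A) + b *\<^sub>R (C - A) \<in> interior (convex hull {A,B,C})"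
proof -
  have "A + a *\<^sub>R (B - A) + b *\<^sub>R (C - A) = (1 - a - b) *\<^sub>R A + a *\<^sub>R B + b *\<^sub>R C"
    by (simp add: algebra_simps)
  moreover have "(1 - a - b) *\<^sub>R A + a *\<^sub>R B + b *\<^sub>R C \<in> {v. \<exists>x y z. 0 < x \<and> 0 < y \<and> 0 < z \<and> x + y + z = 1 \<and> x *\<^sub>R A + y *\<^sub>R B + z *\<^sub>R C = v}"
    using assms by (intro CollectI exI[of _ "1-a-b"] exI[of _ a] exI[of _ b]) auto
  ultimately show ?thesis using interior_convex_hull_3_minimal[OF assms(1)] by simp
qed

lemma frontier_tri:
  fixes A B C :: "real \<times> real"
  assumes "\<not> collinear {A,B,C}" "Y \<in> frontier (convex hull {A,B,C})"
  shows "Y \<in> closed_segment A B \<union> closed_segment B C \<union> closed_segment A C"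
proof -
  have cl: "closed (convex hull {A,B,C})"
    by (simp add: compact_imp_closed finite_imp_compact_convex_hull)
  have "Y \<in> convex hull {A,B,C}" using assms(2) frontier_subset_closed[OF cl] by blast
  then obtain u v w where Y: "Y = u *\<^sub>R A + v *\<^sub>R B + w *\<^sub>R C" "0 \<le> u" "0 \<le> v" "0 \<le> w" "u+v+w=1"
    unfolding convex_hull_3 by blast
  have "Y \<notin> interior (convex hull {A,B,C})" using assms(2) by (simp add: frontier_def)
  moreover have "Y \<in> interior (convex hull {A,B,C})" if "0 < u \<and> 0 < v \<and> 0 < w"
  proof -
    have "Y \<in> {v. \<exists>x y z. 0 < x \<and> 0 < y \<and> 0 < z \<and> x + y + z = 1 \<and> x *\<^sub>R A + y *\<^sub>R B + z *\<^sub>R C = v}"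
      using that Y by blast
    then show ?thesis using interior_convex_hull_3_minimal[OF assms(1)] by simp
  qed
  ultimately have "\<not> (0 < u \<and> 0 < v \<and> 0 < w)" by blast
  then have "u = 0 \<or> v = 0 \<or> w = 0" using Y by auto
  then show ?thesis
  proof (elim disjE)
    assume "u = 0"
    then have "v = 1 - w" using Y by simp
    then have "Y = (1 - w) *\<^sub>R B + w *\<^sub>R C" "0 \<le> w" "w \<le> 1" using Y \<open>u = 0\<close> by auto
    then show ?thesis using in_segment(1)[of Y B C] by blast
  next
    assume "v = 0"
    then have "u = 1 - w" using Y by simp
    then have "Y = (1 - w) *\<^sub>R A + w *\<^sub>R C" "0 \<le> w" "w \<le> 1" using Y \<open>v = 0\<close> by auto
    then show ?thesis using in_segment(1)[of Y A C] by blast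
  next
    assume "w = 0"
    then have "u = 1 - v" using Y by simp
    then have "Y = (1 - v) *\<^sub>R A + v *\<^sub>R B" "0 \<le> v" "v \<le> 1" using Y \<open>w = 0\<close> by auto
    then show ?thesis using in_segment(1)[of Y A B] by blast
  qed
qed

lemma conv_not_outside:
  fixes A B C :: "real \<times> real"
  assumes nc: "\<not> collinear {A,B,C}"
    and segs: "closed_segment A B \<union> closed_segment B C \<union> closed_segment A C \<subseteq> - outside S"
    and X: "X \<in> convex hull {A,B,C}"
  shows "X \<notin> outside S"
proof
  assume Xo: "X \<in> outside S"
  define K where "K = connected_component_set (- S) X"
  have Kunb: "\<not> bounded K" using Xo by (simp add: outside K_def)
  have Ksub: "K \<subseteq> outside S"
  proof
    fix y assume "y \<in> K"
    then have "connected_component_set (- S) y = K" unfolding K_def by (rule connected_component_eq)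
    then show "y \<in> outside S" using Kunb by (simp add: outside)
  qed
  have "X \<in> K" unfolding K_def
  proof -
    have "X \<in> - S" using Xo inside_Un_outside[of S] by blast
    then show "X \<in> connected_component_set (- S) X" by (simp add: connected_component_refl)
  qed
  have bd: "bounded (convex hull {A,B,C})" by (simp add: finite_imp_bounded_convex_hull)
  have h3: "K - convex hull {A,B,C} \<noteq> {}"
  proof
    assume "K - convex hull {A,B,C} = {}"
    then have "K \<subseteq> convex hull {A,B,C}" by blast
    then show False using Kunb bd bounded_subset by blast
  qed
  have h2: "K \<inter> convex hull {A,B,C} \<noteq> {}" using X \<open>X \<in> K\<close> by blast
  have h1: "connected K" unfolding K_def by simp
  have "K \<inter> frontier (convex hull {A,B,C}) \<noteq> {}"
    by (rule connected_Int_frontier[OF h1 h2 h3])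
  then obtain Y where Y: "Y \<in> K" "Y \<in> frontier (convex hull {A,B,C})" by blast
  have "Y \<in> - outside S" using frontier_tri[OF nc Y(2)] segs by (rule subsetD[rotated])
  moreover have "Y \<in> outside S" using Y(1) Ksub by (rule subsetD[rotated])
  ultimately show False by (meson ComplD)
qed

lemma abs_add_same: fixes p q :: int assumes "p* q \<ge> 0" shows "\<bar>p+q\<bar> = \<bar>p\<bar>+\<bar>q\<bar>"
  using assms by (auto simp: zero_le_mult_iff)
lemma abs_comb:
  fixes a b x y :: int
  assumes "a* b \<ge> 0" "x* y \<ge> 0"
  shows "\<bar>x* a + y* b\<bar> = \<bar>x\<bar>*\<bar>a\<bar> + \<bar>y\<bar>*\<bar>b\<bar>"
proof -
  have "(x* a)*(y* b) = (x* y)*(a* b)" by (simp add: algebra_simps)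
  also have "\<dots> \<ge> 0" using assms by simp
  finally show ?thesis using abs_add_same[of "x* a" "y* b"] by (simp add: abs_mult)
qed

lemma abs_add_opp: fixes p q :: int assumes "p* q \<le> 0" shows "\<bar>p+q\<bar> = \<bar>\<bar>p\<bar>-\<bar>q\<bar>\<bar>"
  using assms by (auto simp: mult_le_0_iff)
lemma abs_diff_same: fixes p q :: int assumes "p* q \<ge> 0" shows "\<bar>p-q\<bar> = \<bar>\<bar>p\<bar>-\<bar>q\<bar>\<bar>"
  using assms by (auto simp: zero_le_mult_iff)
lemma abs_diff_opp: fixes p q :: int assumes "p* q \<le> 0" shows "\<bar>p-q\<bar> = \<bar>p\<bar>+\<bar>q\<bar>"
  using assms by (auto simp: mult_le_0_iff)

lemma sc_core1:
  fixes a1 a2 b1 b2 :: int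
  assumes d: "\<bar>a1* b2 - a2* b1\<bar> = 1"
    and la: "\<bar>a1+b1\<bar>+\<bar>a2+b2\<bar> > \<bar>a1\<bar>+\<bar>a2\<bar>"
    and lb: "\<bar>a1+b1\<bar>+\<bar>a2+b2\<bar> > \<bar>b1\<bar>+\<bar>b2\<bar>"
    and neg: "a1* b1 < 0" and pos: "a2* b2 \<ge> 0"
  shows False
proof -
  have e1: "\<bar>a1+b1\<bar> = \<bar>\<bar>a1\<bar>-\<bar>b1\<bar>\<bar>" using neg abs_add_opp[of a1 b1] by simp
  have e2: "\<bar>a2+b2\<bar> = \<bar>a2\<bar>+\<bar>b2\<bar>" using pos abs_add_same by simp
  have "(a1* b2)*(a2* b1) = (a1* b1)*(a2* b2)" by (simp add: algebra_simps)
  also have "\<dots> \<le> 0" using neg pos mult_nonpos_nonneg[of "a1* b1" "a2* b2"] by simp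
  finally have dd: "\<bar>a1* b2 - a2* b1\<bar> = \<bar>a1\<bar>*\<bar>b2\<bar> + \<bar>a2\<bar>*\<bar>b1\<bar>"
    using abs_diff_opp[of "a1* b2" "a2* b1"] by (simp add: abs_mult)
  define p where "p = \<bar>a1\<bar>" define q where "q = \<bar>b1\<bar>"
  define r where "r = \<bar>a2\<bar>" define s where "s = \<bar>b2\<bar>"
  have pos: "p \<ge> 1" "q \<ge> 1" "r \<ge> 0" "s \<ge> 0" using neg 
    by (auto simp: mult_less_0_iff p_def q_def r_def s_def)
  have la': "\<bar>p-q\<bar> + r + s > p + r" using la e1 e2 unfolding p_def q_def r_def s_def by simp
  have lb': "\<bar>p-q\<bar> + r + s > q + s" using lb e1 e2 unfolding p_def q_def r_def s_def by simp
  have d': "p* s + r* q = 1" using d dd unfolding p_def q_def r_def s_def by simp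
  have "p* s \<ge> s" using pos by (simp add: mult_le_cancel_right1)
  moreover have "r* q \<ge> r" using pos by (simp add: mult_le_cancel_left1)
  ultimately show False using d' la' lb' pos by (cases "p \<ge> q") auto
qed

lemma sc_core2:
  fixes a1 a2 b1 b2 :: int
  assumes d: "\<bar>a1* b2 - a2* b1\<bar> = 1"
    and la: "\<bar>a1+b1\<bar>+\<bar>a2+b2\<bar> > \<bar>a1\<bar>+\<bar>a2\<bar>"
    and lb: "\<bar>a1+b1\<bar>+\<bar>a2+b2\<bar> > \<bar>b1\<bar>+\<bar>b2\<bar>"
    and neg: "a1* b1 < 0" and neg2: "a2* b2 < 0"
  shows False
proof -
  have e1: "\<bar>a1+b1\<bar> = \<bar>\<bar>a1\<bar>-\<bar>b1\<bar>\<bar>" using neg abs_add_opp[of a1 b1] by simp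
  have e2: "\<bar>a2+b2\<bar> = \<bar>\<bar>a2\<bar>-\<bar>b2\<bar>\<bar>" using neg2 abs_add_opp[of a2 b2] by simp
  have "(a1* b2)*(a2* b1) = (a1* b1)*(a2* b2)" by (simp add: algebra_simps)
  also have "\<dots> \<ge> 0" using neg neg2 by (simp add: zero_le_mult_iff)
  finally have dd: "\<bar>a1* b2 - a2* b1\<bar> = \<bar>\<bar>a1\<bar>*\<bar>b2\<bar> - \<bar>a2\<bar>*\<bar>b1\<bar>\<bar>"
    using abs_diff_same[of "a1* b2" "a2* b1"] by (simp add: abs_mult)
  define p where "p = \<bar>a1\<bar>" define q where "q = \<bar>b1\<bar>"
  define r where "r = \<bar>a2\<bar>" define s where "s = \<bar>b2\<bar>"
  have pos: "p \<ge> 1" "q \<ge> 1" "r \<ge> 1" "s \<ge> 1" using neg neg2 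
    by (auto simp: mult_less_0_iff p_def q_def r_def s_def)
  have la': "\<bar>p-q\<bar> + \<bar>r-s\<bar> > p + r" using la e1 e2 unfolding p_def q_def r_def s_def by simp
  have lb': "\<bar>p-q\<bar> + \<bar>r-s\<bar> > q + s" using lb e1 e2 unfolding p_def q_def r_def s_def by simp
  have d': "\<bar>p* s - r* q\<bar> = 1" using d dd unfolding p_def q_def r_def s_def by simp
  show False
  proof (cases "p \<ge> q")
    case True
    then have "s \<ge> q + 2* r + 1" "p \<ge> 2* q + r + 1" using la' lb' pos by auto
    then have "p* s \<ge> (2* q + r + 1)*(q + 2* r + 1)" using pos by (intro mult_mono) auto
    moreover have "(2* q + r + 1)*(q + 2* r + 1) = 2*(q* q) + 5*(r* q) + 2*(r* r) + 3* q + 3* r + 1" by (simp add: algebra_simps)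
    moreover have "q* q \<ge> 0" "r* r \<ge> 0" "r* q \<ge> 0" using pos by auto
    ultimately have "p* s \<ge> r* q + 2" using pos by linarith
    then show False using d' by linarith
  next
    case False
    then have "r \<ge> p + 2* s + 1" "q \<ge> 2* p + s + 1" using la' lb' pos by auto
    then have "r* q \<ge> (p + 2* s + 1)*(2* p + s + 1)" using pos by (intro mult_mono) auto
    moreover have "(p + 2* s + 1)*(2* p + s + 1) = 2*(p* p) + 5*(p* s) + 2*(s* s) + 3* p + 3* s + 1" by (simp add: algebra_simps)
    moreover have "p* p \<ge> 0" "s* s \<ge> 0" "p* s \<ge> 0" using pos by auto
    ultimately have "r* q \<ge> p* s + 2" using pos by linarith
    then show False using d' by linarith
  qed
qed

lemma sign_compat:
  fixes a1 a2 b1 b2 :: int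
  assumes d: "\<bar>a1* b2 - a2* b1\<bar> = 1"
    and la: "\<bar>a1+b1\<bar>+\<bar>a2+b2\<bar> > \<bar>a1\<bar>+\<bar>a2\<bar>"
    and lb: "\<bar>a1+b1\<bar>+\<bar>a2+b2\<bar> > \<bar>b1\<bar>+\<bar>b2\<bar>"
  shows "a1* b1 \<ge> 0 \<and> a2* b2 \<ge> 0"
proof (rule ccontr)
  assume "\<not> ?thesis"
  then consider "a1* b1 < 0" "a2* b2 \<ge> 0" | "a1* b1 < 0" "a2* b2 < 0" | "a1* b1 \<ge> 0" "a2* b2 < 0" by linarith
  then show False
  proof cases
    case 1 then show ?thesis using sc_core1[OF d la lb] by blast
  next
    case 2 then show ?thesis using sc_core2[OF d la lb] by blast
  next
    case 3
    have d2: "\<bar>a2* b1 - a1* b2\<bar> = 1" using d by linarith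
    show ?thesis using sc_core1[of a2 b1 a1 b2] d2 la lb 3 by (simp add: add.commute)
  qed
qed

lemma lat_reduce:
  fixes u1 u2 v1 v2 e1 e2 a b D :: int
  assumes D: "D \<ge> 2" and h1: "D* e1 = a* u1 + b* v1" and h2: "D* e2 = a* u2 + b* v2"
    and nd: "\<not> (D dvd a \<and> D dvd b)"
  shows "\<exists>p1 p2 m n. D* p1 = m* u1 + n* v1 \<and> D* p2 = m* u2 + n* v2 \<and> 0 \<le> m \<and> 0 \<le> n
          \<and> (0 < m \<or> 0 < n) \<and> m + n \<le> D \<and> m < D \<and> n < D"
proof -
  define m where "m = a mod D" define n where "n = b mod D"
  define p1 where "p1 = e1 - (a div D)* u1 - (b div D)* v1"
  define p2 where "p2 = e2 - (a div D)* u2 - (b div D)* v2"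
  have am: "m = a - D*(a div D)" "n = b - D*(b div D)" by (simp_all add: m_def n_def minus_mult_div_eq_mod)
  have q1: "D* p1 = m* u1 + n* v1"
  proof -
    have "D* p1 = D* e1 - D*(a div D)* u1 - D*(b div D)* v1" by (simp add: p1_def algebra_simps)
    also have "\<dots> = a* u1 + b* v1 - D*(a div D)* u1 - D*(b div D)* v1" using h1 by simp
    also have "\<dots> = m* u1 + n* v1" unfolding am by (simp add: algebra_simps)
    finally show ?thesis .
  qed
  have q2: "D* p2 = m* u2 + n* v2"
  proof -
    have "D* p2 = D* e2 - D*(a div D)* u2 - D*(b div D)* v2" by (simp add: p2_def algebra_simps)
    also have "\<dots> = a* u2 + b* v2 - D*(a div D)* u2 - D*(b div D)* v2" using h2 by simp
    also have "\<dots> = m* u2 + n* v2" unfolding am by (simp add: algebra_simps)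
    finally show ?thesis .
  qed
  have mr: "0 \<le> m" "m < D" "0 \<le> n" "n < D" using D by (simp_all add: m_def n_def)
  have nz: "0 < m \<or> 0 < n"
  proof (rule ccontr)
    assume "\<not> (0 < m \<or> 0 < n)"
    then have "a mod D = 0" "b mod D = 0" using mr unfolding m_def n_def by linarith+
    then have "D dvd a" "D dvd b" by (simp_all only: dvd_eq_mod_eq_0)
    then show False using nd by blast
  qed
  show ?thesis
  proof (cases "m + n \<le> D")
    case True then show ?thesis using q1 q2 mr nz by blast
  next
    case False
    have "D*(u1+v1-p1) = (D-m)* u1 + (D-n)* v1" using q1 by (simp add: algebra_simps)
    moreover have "D*(u2+v2-p2) = (D-m)* u2 + (D-n)* v2" using q2 by (simp add: algebra_simps)
    moreover have "0 \<le> D-m" "0 \<le> D - n" "0 < D - m" "(D-m)+(D-n) \<le> D" "D-m < D" "D-n<D"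
      using False mr by auto
    ultimately show ?thesis by blast
  qed
qed

lemma lat_point:
  fixes u1 u2 v1 v2 :: int
  assumes D: "u1* v2 - u2* v1 \<ge> 2"
  shows "\<exists>p1 p2 m n. (u1* v2 - u2* v1)* p1 = m* u1 + n* v1 \<and> (u1* v2 - u2* v1)* p2 = m* u2 + n* v2
          \<and> 0 \<le> m \<and> 0 \<le> n \<and> (0 < m \<or> 0 < n) \<and> m + n \<le> (u1* v2 - u2* v1)
          \<and> m < (u1* v2 - u2* v1) \<and> n < (u1* v2 - u2* v1)"
proof -
  define D where "D = u1* v2 - u2* v1"
  have D2: "D \<ge> 2" using D D_def by simp
  have i1: "D*1 = v2* u1 + (-u2)* v1" "D*0 = v2* u2 + (-u2)* v2" by (simp_all add: D_def algebra_simps)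
  have i2: "D*0 = (-v1)* u1 + u1* v1" "D*1 = (-v1)* u2 + u1* v2" by (simp_all add: D_def algebra_simps)
  have "\<not> ((D dvd v2 \<and> D dvd -u2) \<and> (D dvd -v1 \<and> D dvd u1))"
  proof
    assume a: "(D dvd v2 \<and> D dvd -u2) \<and> (D dvd -v1 \<and> D dvd u1)"
    then have "D* D dvd u1* v2" "D* D dvd u2* v1" by (auto intro: mult_dvd_mono)
    then have "D* D dvd D" unfolding D_def by (metis D_def dvd_diff)
    then have "D* D \<le> D" using D2 by (simp add: zdvd_imp_le)
    moreover have "2* D \<le> D* D" using D2 by (intro mult_right_mono) auto
    ultimately show False using D2 by linarith
  qed
  then have "\<not> (D dvd v2 \<and> D dvd -u2) \<or> \<not> (D dvd -v1 \<and> D dvd u1)" by blast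
  then show ?thesis
  proof
    assume "\<not> (D dvd v2 \<and> D dvd -u2)"
    from lat_reduce[OF D2 i1(1) i1(2) this] show ?thesis unfolding D_def .
  next
    assume "\<not> (D dvd -v1 \<and> D dvd u1)"
    from lat_reduce[OF D2 i2(1) i2(2) this] show ?thesis unfolding D_def .
  qed
qed

lemma lin_ge_min:
  fixes x y A B :: int
  assumes "A \<ge> 0" "B \<ge> 0" "x \<ge> 0" "y \<ge> 0" "x \<ge> 1 \<or> y \<ge> 1"
  shows "min A B \<le> x* A + y* B"
proof -
  have "x* A \<ge> 0" "y* B \<ge> 0" using assms by auto
  moreover have "x \<ge> 1 \<Longrightarrow> x* A \<ge> A" using assms by (simp add: mult_le_cancel_right1)
  moreover have "y \<ge> 1 \<Longrightarrow> y* B \<ge> B" using assms by (simp add: mult_le_cancel_right1)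
  ultimately show ?thesis using assms(5) by linarith
qed

lemma consec: fixes k :: int shows "(k - 1) * k \<ge> 0"
proof (cases "k \<ge> 1")
  case True then show ?thesis by simp
next
  case False then have "k - 1 \<le> 0" "k \<le> 0" by auto
  then show ?thesis by (simp add: mult_nonpos_nonpos)
qed

lemma core_L:
  fixes z1 z2 r1 r2 s1 s2 :: int
  assumes u: "\<bar>z1* r2 - z2* r1\<bar> = 1"
    and opp: "z1 * s2 - z2 * s1 = -(z1* r2 - z2* r1)"
    and l1: "\<bar>z1\<bar>+\<bar>z2\<bar> > \<bar>s1\<bar>+\<bar>s2\<bar>"
    and l2: "\<bar>z1\<bar>+\<bar>z2\<bar> > \<bar>z1-s1\<bar>+\<bar>z2-s2\<bar>"
  shows "min (\<bar>s1\<bar>+\<bar>s2\<bar>) (\<bar>z1-s1\<bar>+\<bar>z2-s2\<bar>) \<le> \<bar>z1\<bar>+\<bar>z2\<bar>"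
    "min (\<bar>s1\<bar>+\<bar>s2\<bar>) (\<bar>z1-s1\<bar>+\<bar>z2-s2\<bar>) \<le> \<bar>r1\<bar>+\<bar>r2\<bar>"
    "min (\<bar>s1\<bar>+\<bar>s2\<bar>) (\<bar>z1-s1\<bar>+\<bar>z2-s2\<bar>) \<le> \<bar>r1-z1\<bar>+\<bar>r2-z2\<bar>"
proof -
  show "min (\<bar>s1\<bar>+\<bar>s2\<bar>) (\<bar>z1-s1\<bar>+\<bar>z2-s2\<bar>) \<le> \<bar>z1\<bar>+\<bar>z2\<bar>" using l1 by linarith
  define e where "e = z1* r2 - z2* r1"
  have ee: "e* e = 1" using u unfolding e_def by (metis abs_mult_self_eq mult_1)
  define w1 where "w1 = r1 + s1" define w2 where "w2 = r2 + s2"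
  have dw: "z1* w2 - z2* w1 = 0" using opp unfolding w1_def w2_def by (simp add: algebra_simps)
  define c where "c = w1* r2 - w2* r1"
  have id1: "e* w1 = c* z1 + (z1* w2 - z2* w1)* r1" unfolding e_def c_def by (simp add: algebra_simps)
  have id2: "e* w2 = c* z2 + (z1* w2 - z2* w1)* r2" unfolding e_def c_def by (simp add: algebra_simps)
  define k where "k = e* c"
  have w1k: "w1 = k* z1"
  proof -
    have "e*(e* w1) = e*(c* z1)" using id1 dw by simp
    then show ?thesis using ee unfolding k_def by (simp add: mult.assoc[symmetric])
  qed
  have w2k: "w2 = k* z2"
  proof -
    have "e*(e* w2) = e*(c* z2)" using id2 dw by simp
    then show ?thesis using ee unfolding k_def by (simp add: mult.assoc[symmetric])
  qed
  define a1 where "a1 = s1" define a2 where "a2 = s2"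
  define b1 where "b1 = z1 - s1" define b2 where "b2 = z2 - s2"
  have sc: "a1* b1 \<ge> 0 \<and> a2* b2 \<ge> 0"
  proof (rule sign_compat)
    have "a1* b2 - a2* b1 = -(z1 * s2 - z2 * s1)" unfolding a1_def a2_def b1_def b2_def by (simp add: algebra_simps)
    then show "\<bar>a1* b2 - a2* b1\<bar> = 1" using opp u by simp
    show "\<bar>a1+b1\<bar>+\<bar>a2+b2\<bar> > \<bar>a1\<bar>+\<bar>a2\<bar>" using l1 unfolding a1_def a2_def b1_def b2_def by simp
    show "\<bar>a1+b1\<bar>+\<bar>a2+b2\<bar> > \<bar>b1\<bar>+\<bar>b2\<bar>" using l2 unfolding a1_def a2_def b1_def b2_def by simp
  qed
  have r1e: "r1 = (k-1)* a1 + k* b1" using w1k unfolding w1_def a1_def b1_def by (simp add: algebra_simps)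
  have r2e: "r2 = (k-1)* a2 + k* b2" using w2k unfolding w2_def a2_def b2_def by (simp add: algebra_simps)
  have q1e: "r1 - z1 = (k-2)* a1 + (k-1)* b1" using w1k unfolding w1_def a1_def b1_def by (simp add: algebra_simps)
  have q2e: "r2 - z2 = (k-2)* a2 + (k-1)* b2" using w2k unfolding w2_def a2_def b2_def by (simp add: algebra_simps)
  have c1: "(k-1)* k \<ge> 0" by (rule consec)
  have c2: "(k-2)*(k-1) \<ge> 0" using consec[of "k-1"] by (simp add: algebra_simps)
  have A: "\<bar>r1\<bar>+\<bar>r2\<bar> = \<bar>k-1\<bar>*(\<bar>a1\<bar>+\<bar>a2\<bar>) + \<bar>k\<bar>*(\<bar>b1\<bar>+\<bar>b2\<bar>)"
  proof -
    have "\<bar>r1\<bar> = \<bar>k-1\<bar>*\<bar>a1\<bar> + \<bar>k\<bar>*\<bar>b1\<bar>" unfolding r1e using abs_comb[of a1 b1 "k-1" k] sc c1 by simp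
    moreover have "\<bar>r2\<bar> = \<bar>k-1\<bar>*\<bar>a2\<bar> + \<bar>k\<bar>*\<bar>b2\<bar>" unfolding r2e using abs_comb[of a2 b2 "k-1" k] sc c1 by simp
    ultimately show ?thesis by (simp add: distrib_left)
  qed
  have B: "\<bar>r1-z1\<bar>+\<bar>r2-z2\<bar> = \<bar>k-2\<bar>*(\<bar>a1\<bar>+\<bar>a2\<bar>) + \<bar>k-1\<bar>*(\<bar>b1\<bar>+\<bar>b2\<bar>)"
  proof -
    have "\<bar>r1-z1\<bar> = \<bar>k-2\<bar>*\<bar>a1\<bar> + \<bar>k-1\<bar>*\<bar>b1\<bar>" unfolding q1e using abs_comb[of a1 b1 "k-2" "k-1"] sc c2 by simp
    moreover have "\<bar>r2-z2\<bar> = \<bar>k-2\<bar>*\<bar>a2\<bar> + \<bar>k-1\<bar>*\<bar>b2\<bar>" unfolding q2e using abs_comb[of a2 b2 "k-2" "k-1"] sc c2 by simp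
    ultimately show ?thesis by (simp add: distrib_left)
  qed
  have m: "min (\<bar>s1\<bar>+\<bar>s2\<bar>) (\<bar>z1-s1\<bar>+\<bar>z2-s2\<bar>) = min (\<bar>a1\<bar>+\<bar>a2\<bar>) (\<bar>b1\<bar>+\<bar>b2\<bar>)"
    unfolding a1_def a2_def b1_def b2_def ..
  show "min (\<bar>s1\<bar>+\<bar>s2\<bar>) (\<bar>z1-s1\<bar>+\<bar>z2-s2\<bar>) \<le> \<bar>r1\<bar>+\<bar>r2\<bar>"
    unfolding m A by (rule lin_ge_min) auto
  show "min (\<bar>s1\<bar>+\<bar>s2\<bar>) (\<bar>z1-s1\<bar>+\<bar>z2-s2\<bar>) \<le> \<bar>r1-z1\<bar>+\<bar>r2-z2\<bar>"
    unfolding m B by (rule lin_ge_min) auto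
qed

lemma pregion_outside: "pregion vs = - outside (pboundary vs)"
  unfolding pregion_def by (rule union_with_inside)

lemma set_aux1: "A \<inter> (B \<union> \<Union>(f ` S)) = {} \<Longrightarrow> A \<inter> B = {}" by blast
lemma set_aux2: "A \<inter> (B \<union> \<Union>(f ` S)) = {} \<Longrightarrow> e \<in> S \<Longrightarrow> A \<inter> f e = {}" by blast

lemma tri3D:
  assumes "tri3 vs \<sigma> P Q R"
  shows "\<not> collinear {rp P, rp Q, rp R}" "{P,Q} \<in> \<sigma>" "{Q,R} \<in> \<sigma>" "{P,R} \<in> \<sigma>"
    "interior (convex hull {rp P, rp Q, rp R}) \<inter> rp ` lattice_pts vs = {}"
    "e \<in> \<sigma> \<Longrightarrow> interior (convex hull {rp P, rp Q, rp R}) \<inter> oseg e = {}"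
proof -
  have c: "\<not> collinear {rp P, rp Q, rp R}" "{{P,Q},{Q,R},{P,R}} \<subseteq> \<sigma>"
    "interior (convex hull {rp P, rp Q, rp R}) \<inter> (rp ` lattice_pts vs \<union> \<Union> (oseg ` \<sigma>)) = {}"
    using assms unfolding tri3_def by simp_all
  show "\<not> collinear {rp P, rp Q, rp R}" "{P,Q} \<in> \<sigma>" "{Q,R} \<in> \<sigma>" "{P,R} \<in> \<sigma>"
    using c(1,2) by simp_all
  show "interior (convex hull {rp P, rp Q, rp R}) \<inter> rp ` lattice_pts vs = {}"
    using set_aux1[OF c(3)] .
  show "e \<in> \<sigma> \<Longrightarrow> interior (convex hull {rp P, rp Q, rp R}) \<inter> oseg e = {}"
    using set_aux2[OF c(3)] .
qed

lemma seg_contra: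
  assumes v: "valid_edge vs {A,B}" and X: "rp X = (1 - t) *\<^sub>R rp A + t *\<^sub>R rp B" and t: "0 < t" "t < 1"
  shows False
proof -
  have "A \<noteq> B" using valid_edgeD(1)[OF v] .
  then have "rp A \<noteq> rp B" by (simp add: rp_inj)
  then have "rp X \<in> open_segment (rp A) (rp B)" unfolding in_segment(2) using X t by blast
  moreover have "open_segment (rp A) (rp B) \<subseteq> pregion vs" using valid_edgeD(5)[OF v] .
  ultimately have "X \<in> lattice_pts vs" unfolding lattice_pts_def by blast
  then show False using valid_edgeD(4)[OF v] \<open>rp X \<in> open_segment (rp A) (rp B)\<close> by blast
qed

lemma cseg_region:
  assumes v: "valid_edge vs {A,B}"
  shows "closed_segment (rp A) (rp B) \<subseteq> - outside (pboundary vs)"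
proof -
  have "closed_segment (rp A) (rp B) = open_segment (rp A) (rp B) \<union> {rp A, rp B}"
    by (rule closed_segment_eq_open)
  moreover have "rp A \<in> pregion vs" "rp B \<in> pregion vs"
    using valid_edgeD(2,3)[OF v] unfolding lattice_pts_def by auto
  ultimately show ?thesis using valid_edgeD(5)[OF v] pregion_outside[of vs] by blast
qed

lemma no_big:
  assumes t: "tri3 vs \<sigma> P Q R" and val: "\<forall>e\<in>\<sigma>. valid_edge vs e" and D: "dt P Q R \<ge> 2"
  shows False
proof -
  define D where "D = dt P Q R"
  have vPQ: "valid_edge vs {P,Q}" and vQR: "valid_edge vs {Q,R}" and vPR: "valid_edge vs {P,R}"
    using tri3D(2-4)[OF t] val by auto
  have nc: "\<not> collinear {rp P, rp Q, rp R}" using tri3D(1)[OF t] .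
  have Ddef: "D = (fst Q - fst P)*(snd R - snd P) - (snd Q - snd P)*(fst R - fst P)"
    unfolding D_def dt_def ..
  obtain p1 p2 m n where h1: "D* p1 = m*(fst Q - fst P) + n*(fst R - fst P)"
      and h2: "D* p2 = m*(snd Q - snd P) + n*(snd R - snd P)"
      and mn: "0 \<le> m" "0 \<le> n" "0 < m \<or> 0 < n" "m + n \<le> D" "m < D" "n < D"
    using lat_point[of "fst Q - fst P" "snd R - snd P" "snd Q - snd P" "fst R - fst P"] D
    unfolding Ddef[symmetric] D_def[symmetric] by blast
  define X where "X = (fst P + p1, snd P + p2)"
  define a where "a = real_of_int m / real_of_int D"
  define b where "b = real_of_int n / real_of_int D"
  have Dp: "real_of_int D > 0" using D D_def by simp
  have r1: "real_of_int D * real_of_int p1 = real_of_int m * (real_of_int (fst Q) - real_of_int (fst P)) + real_of_int n * (real_of_int (fst R) - real_of_int (fst P))"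
    using arg_cong[OF h1, of real_of_int] by simp
  have r2: "real_of_int D * real_of_int p2 = real_of_int m * (real_of_int (snd Q) - real_of_int (snd P)) + real_of_int n * (real_of_int (snd R) - real_of_int (snd P))"
    using arg_cong[OF h2, of real_of_int] by simp
  have X1: "real_of_int (fst P) + real_of_int p1 = (1 - a - b) * real_of_int (fst P) + a * real_of_int (fst Q) + b * real_of_int (fst R)"
  proof -
    have "real_of_int p1 = (real_of_int D * real_of_int p1) / real_of_int D" using Dp by simp
    also have "\<dots> = a * (real_of_int (fst Q) - real_of_int (fst P)) + b * (real_of_int (fst R) - real_of_int (fst P))"
      unfolding r1 a_def b_def using Dp by (simp add: field_simps)
    finally show ?thesis by (simp add: algebra_simps)
  qed
  have X2: "real_of_int (snd P) + real_of_int p2 = (1 - a - b) * real_of_int (snd P) + a * real_of_int (snd Q) + b * real_of_int (snd R)"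
  proof -
    have "real_of_int p2 = (real_of_int D * real_of_int p2) / real_of_int D" using Dp by simp
    also have "\<dots> = a * (real_of_int (snd Q) - real_of_int (snd P)) + b * (real_of_int (snd R) - real_of_int (snd P))"
      unfolding r2 a_def b_def using Dp by (simp add: field_simps)
    finally show ?thesis by (simp add: algebra_simps)
  qed
  have rX: "rp X = (1 - a - b) *\<^sub>R rp P + a *\<^sub>R rp Q + b *\<^sub>R rp R"
    unfolding X_def rp_def using X1 X2 by (simp add: prod_eq_iff)
  have ab: "0 \<le> a" "0 \<le> b" "a < 1" "b < 1" "a + b \<le> 1" "0 < a \<or> 0 < b"
    using mn Dp unfolding a_def b_def by (auto simp: divide_simps)
  have abeq: "a + b = 1 \<longleftrightarrow> m + n = D"
  proof -
    have "a + b = real_of_int (m + n) / real_of_int D" unfolding a_def b_def by (simp add: add_divide_distrib)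
    then show ?thesis using Dp by (auto simp: divide_simps)
  qed
  consider "a = 0" | "b = 0" | "a + b = 1" | "0 < a" "0 < b" "a + b < 1" using ab by linarith
  then show False
  proof cases
    case 1
    then have "rp X = (1 - b) *\<^sub>R rp P + b *\<^sub>R rp R" using rX by simp
    then show False using seg_contra[OF vPR, of X b] ab 1 by auto
  next
    case 2
    then have "rp X = (1 - a) *\<^sub>R rp P + a *\<^sub>R rp Q" using rX by simp
    then show False using seg_contra[OF vPQ, of X a] ab 2 by auto
  next
    case 3
    then have "1 - a - b = 0" "a = 1 - b" by simp_all
    then have "rp X = (1 - b) *\<^sub>R rp Q + b *\<^sub>R rp R" using rX by simp
    moreover have "0 < b" "b < 1" using ab 3 by auto
    ultimately show False using seg_contra[OF vQR, of X b] by blast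
  next
    case 4
    have "rp X = rp P + a *\<^sub>R (rp Q - rp P) + b *\<^sub>R (rp R - rp P)"
      using rX by (simp add: algebra_simps)
    then have Xi: "rp X \<in> interior (convex hull {rp P, rp Q, rp R})"
      using interior_pt[OF nc 4] by simp
    have segs: "closed_segment (rp P) (rp Q) \<union> closed_segment (rp Q) (rp R) \<union> closed_segment (rp P) (rp R)
        \<subseteq> - outside (pboundary vs)"
      using cseg_region[OF vPQ] cseg_region[OF vQR] cseg_region[OF vPR] by blast
    have "rp X \<in> convex hull {rp P, rp Q, rp R}" using Xi interior_subset by blast
    then have "rp X \<notin> outside (pboundary vs)" using conv_not_outside[OF nc segs] by blast
    then have "X \<in> lattice_pts vs" unfolding lattice_pts_def pregion_outside by simp
    then have "rp X \<in> rp ` lattice_pts vs" by (rule imageI)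
    moreover have "interior (convex hull {rp P, rp Q, rp R}) \<inter> rp ` lattice_pts vs = {}"
      using tri3D(5)[OF t] .
    ultimately show False using Xi by blast
  qed
qed

lemma unimod:
  assumes t: "tri3 vs \<sigma> P Q R" and val: "\<forall>e\<in>\<sigma>. valid_edge vs e"
  shows "\<bar>dt P Q R\<bar> = 1"
proof -
  have "dt P Q R \<noteq> 0" using tri3D(1)[OF t] dt_collinear by blast
  moreover have "\<not> dt P Q R \<ge> 2" using no_big[OF t val] by blast
  moreover have "dt P R Q = - dt P Q R" unfolding dt_def by (simp add: algebra_simps)
  moreover have "\<not> dt P R Q \<ge> 2" using no_big[OF tri3_perm2[OF t] val] by blast
  ultimately show ?thesis by linarith
qed

lemma rp_sub: "rp A - rp B = (real_of_int (fst A - fst B), real_of_int (snd A - snd B))"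
  by (simp add: rp_def)

lemma same_side_contra:
  assumes tU: "tri3 vs \<sigma> P Q R" and tL: "tri3 vs \<sigma> P Q S" and RS: "R \<noteq> S"
    and eq: "dt P Q S = dt P Q R" and u: "\<bar>dt P Q R\<bar> = 1"
  shows False
proof -
  define z1 where "z1 = fst Q - fst P" define z2 where "z2 = snd Q - snd P"
  define r1 where "r1 = fst R - fst P" define r2 where "r2 = snd R - snd P"
  define s1 where "s1 = fst S - fst P" define s2 where "s2 = snd S - snd P"
  define e where "e = z1* r2 - z2* r1"
  have ee: "e* e = 1" using u unfolding e_def z1_def z2_def r1_def r2_def dt_def by (metis abs_mult_self_eq mult_1)
  define w1 where "w1 = s1 - r1" define w2 where "w2 = s2 - r2"
  have dw: "z1* w2 - z2* w1 = 0" using eq unfolding w1_def w2_def z1_def z2_def r1_def r2_def s1_def s2_def dt_def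
    by (simp add: algebra_simps)
  define c where "c = w1* r2 - w2* r1"
  have id1: "e* w1 = c* z1 + (z1* w2 - z2* w1)* r1" unfolding e_def c_def by (simp add: algebra_simps)
  have id2: "e* w2 = c* z2 + (z1* w2 - z2* w1)* r2" unfolding e_def c_def by (simp add: algebra_simps)
  define k where "k = e* c"
  have w1k: "w1 = k* z1"
  proof -
    have "e*(e* w1) = e*(c* z1)" using id1 dw by simp
    then show ?thesis using ee unfolding k_def by (simp add: mult.assoc[symmetric])
  qed
  have w2k: "w2 = k* z2"
  proof -
    have "e*(e* w2) = e*(c* z2)" using id2 dw by simp
    then show ?thesis using ee unfolding k_def by (simp add: mult.assoc[symmetric])
  qed
  have k0: "k \<noteq> 0"
  proof
    assume "k = 0"
    then have "fst S = fst R" "snd S = snd R" using w1k w2k unfolding w1_def w2_def s1_def s2_def r1_def r2_def by simp_all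
    then show False using RS by (simp add: prod_eq_iff)
  qed
  define zr where "zr = rp Q - rp P" define rr where "rr = rp R - rp P"
  have Sx: "rp S = rp P + rr + real_of_int k *\<^sub>R zr"
  proof -
    have a: "fst S = fst P + r1 + k* z1" "snd S = snd P + r2 + k* z2"
      using w1k w2k unfolding w1_def w2_def s1_def s2_def r1_def r2_def by simp_all
    have b1: "real_of_int (fst S) = real_of_int (fst P) + real_of_int r1 + real_of_int k * real_of_int z1"
      using a(1) by (metis of_int_add of_int_mult)
    have b2: "real_of_int (snd S) = real_of_int (snd P) + real_of_int r2 + real_of_int k * real_of_int z2"
      using a(2) by (metis of_int_add of_int_mult)
    show ?thesis unfolding zr_def rr_def rp_def
      by (simp add: prod_eq_iff b1 b2 z1_def z2_def r1_def r2_def algebra_simps)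
  qed
  have nc: "\<not> collinear {rp P, rp Q, rp R}" using tri3D(1)[OF tU] .
  have ncS: "\<not> collinear {rp P, rp Q, rp S}" using tri3D(1)[OF tL] .
  have PS: "rp P \<noteq> rp S" "rp Q \<noteq> rp S" using ncS by (auto simp: collinear_2 insert_commute)
  show False
  proof (cases "k \<ge> 1")
    case True
    define t where "t = 1 / (2 * (real_of_int k + 1))"
    have kp: "real_of_int k \<ge> 1" using True by simp
    have t: "0 < t" "t < 1" "t * real_of_int k + t = 1/2" using kp unfolding t_def by (auto simp: field_simps)
    define X where "X = (1 - t) *\<^sub>R rp P + t *\<^sub>R rp S"
    have "X \<in> open_segment (rp P) (rp S)" unfolding in_segment(2) X_def using t PS by blast
    then have Xo: "X \<in> oseg {P,S}" by (simp add: oseg_pair)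
    have "X = rp P + (t * real_of_int k) *\<^sub>R (rp Q - rp P) + t *\<^sub>R (rp R - rp P)"
      unfolding X_def Sx zr_def rr_def by (simp add: algebra_simps)
    moreover have "t * real_of_int k > 0" using t kp by simp
    ultimately have "X \<in> interior (convex hull {rp P, rp Q, rp R})"
      using interior_pt[OF nc, of "t * real_of_int k" t] t by simp
    then show False using tri3D(6)[OF tU tri3D(4)[OF tL]] Xo by blast
  next
    case False
    then have km: "real_of_int k \<le> -1" using k0 by simp
    define t where "t = 1 / (2 * (1 - real_of_int k))"
    have t: "0 < t" "t < 1" "t \<le> 1/4" "1 + t * (real_of_int k - 1) = 1/2" using km unfolding t_def by (auto simp: field_simps)
    define X where "X = (1 - t) *\<^sub>R rp Q + t *\<^sub>R rp S"
    have "X \<in> open_segment (rp Q) (rp S)" unfolding in_segment(2) X_def using t PS by blast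
    then have Xo: "X \<in> oseg {Q,S}" by (simp add: oseg_pair)
    have "X = rp P + (1 + t * (real_of_int k - 1)) *\<^sub>R (rp Q - rp P) + t *\<^sub>R (rp R - rp P)"
      unfolding X_def Sx zr_def rr_def by (simp add: algebra_simps)
    then have "X \<in> interior (convex hull {rp P, rp Q, rp R})"
      using interior_pt[OF nc, of "1 + t * (real_of_int k - 1)" t] t by simp
    then show False using tri3D(6)[OF tU tri3D(3)[OF tL]] Xo by blast
  qed
qed

lemma lemma_L:
  assumes tU: "tri3 vs \<sigma> P Q R" and tL: "tri3 vs \<sigma> P Q S" and RS: "R \<noteq> S"
    and val: "\<forall>e\<in>\<sigma>. valid_edge vs e"
    and l1: "l1len {P,Q} > l1len {P,S}" and l2: "l1len {P,Q} > l1len {Q,S}"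
  shows "min (l1len {P,S}) (l1len {Q,S}) \<le> l1len {P,Q}"
    "min (l1len {P,S}) (l1len {Q,S}) \<le> l1len {P,R}"
    "min (l1len {P,S}) (l1len {Q,S}) \<le> l1len {Q,R}"
proof -
  have uR: "\<bar>dt P Q R\<bar> = 1" by (rule unimod[OF tU val])
  have uS: "\<bar>dt P Q S\<bar> = 1" by (rule unimod[OF tL val])
  have "dt P Q S \<noteq> dt P Q R" using same_side_contra[OF tU tL RS _ uR] by blast
  then have opp: "dt P Q S = - dt P Q R" using uR uS by linarith
  define z1 where "z1 = fst Q - fst P" define z2 where "z2 = snd Q - snd P"
  define r1 where "r1 = fst R - fst P" define r2 where "r2 = snd R - snd P"
  define s1 where "s1 = fst S - fst P" define s2 where "s2 = snd S - snd P"
  have LPS: "l1len {P,S} = \<bar>s1\<bar> + \<bar>s2\<bar>" unfolding l1_pair s1_def s2_def by (simp add: abs_minus_commute)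
  have LQS: "l1len {Q,S} = \<bar>z1-s1\<bar> + \<bar>z2-s2\<bar>" unfolding l1_pair s1_def s2_def z1_def z2_def by simp
  have LPQ: "l1len {P,Q} = \<bar>z1\<bar> + \<bar>z2\<bar>" unfolding l1_pair z1_def z2_def by (simp add: abs_minus_commute)
  have LPR: "l1len {P,R} = \<bar>r1\<bar> + \<bar>r2\<bar>" unfolding l1_pair r1_def r2_def by (simp add: abs_minus_commute)
  have LQR: "l1len {Q,R} = \<bar>r1-z1\<bar> + \<bar>r2-z2\<bar>" unfolding l1_pair r1_def r2_def z1_def z2_def
    by (simp add: abs_minus_commute)
  have u': "\<bar>z1* r2 - z2* r1\<bar> = 1" using uR unfolding dt_def z1_def z2_def r1_def r2_def .
  have o': "z1 * s2 - z2 * s1 = -(z1* r2 - z2* r1)" using opp unfolding dt_def z1_def z2_def r1_def r2_def s1_def s2_def .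
  note c = core_L[OF u' o' l1[unfolded LPQ LPS] l2[unfolded LPQ LQS]]
  show "min (l1len {P,S}) (l1len {Q,S}) \<le> l1len {P,Q}" using c(1) unfolding LPS LQS LPQ .
  show "min (l1len {P,S}) (l1len {Q,S}) \<le> l1len {P,R}" using c(2) unfolding LPS LQS LPR .
  show "min (l1len {P,S}) (l1len {Q,S}) \<le> l1len {Q,R}" using c(3) unfolding LPS LQS LQR .
qed

lemma tri_of_sub: "tri_of vs \<sigma> T \<Longrightarrow> T \<subseteq> \<sigma>"
  unfolding tri_of_def by blast

lemma noncol_distinct:
  assumes "\<not> collinear {rp P, rp Q, rp S}"
  shows "P \<noteq> Q" "Q \<noteq> S" "P \<noteq> S"
  using assms by (auto simp: collinear_2 insert_commute)

lemma L_core: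
  assumes val: "\<forall>e\<in>\<sigma>. valid_edge vs e"
    and tU: "tri3 vs \<sigma> P Q R" and tL: "tri3 vs \<sigma> P Q S"
    and A: "A = {{P,Q},{Q,R},{P,R}}" and B: "B = {{P,Q},{Q,S},{P,S}}"
    and AB: "A \<noteq> B" and lg: "longest B {P,Q}"
  shows "Min (l1len ` B) \<le> Min (l1len ` A)"
proof -
  have RS: "R \<noteq> S" using AB A B by blast
  have d: "P \<noteq> Q" "Q \<noteq> S" "P \<noteq> S" using noncol_distinct[OF tri3D(1)[OF tL]] by auto
  have inB: "{P,S} \<in> B" "{Q,S} \<in> B" using B by auto
  have ne1: "{P,S} \<noteq> {P,Q}"
  proof
    assume h: "{P,S} = {P,Q}"
    have "S \<in> {P,S}" by simp
    then have "S \<in> {P,Q}" by (simp only: h)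
    then show False using d by simp
  qed
  have ne2: "{Q,S} \<noteq> {P,Q}"
  proof
    assume h: "{Q,S} = {P,Q}"
    have "S \<in> {Q,S}" by simp
    then have "S \<in> {P,Q}" by (simp only: h)
    then show False using d by simp
  qed
  have lgB: "\<forall>f\<in>B. f \<noteq> {P,Q} \<longrightarrow> l1len f < l1len {P,Q}" using lg unfolding longest_def by simp
  have l1: "l1len {P,Q} > l1len {P,S}" using lgB inB(1) ne1 by simp
  have l2: "l1len {P,Q} > l1len {Q,S}" using lgB inB(2) ne2 by simp
  note c = lemma_L[OF tU tL RS val l1 l2]
  have fB: "finite (l1len ` B)" using B by simp
  have "Min (l1len ` B) \<le> l1len {P,S}" "Min (l1len ` B) \<le> l1len {Q,S}"
    using Min_le[OF fB] B by auto
  then have mB: "Min (l1len ` B) \<le> min (l1len {P,S}) (l1len {Q,S})" by simp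
  have fA: "finite (l1len ` A)" "l1len ` A \<noteq> {}" using A by auto
  have "Min (l1len ` A) \<in> l1len ` A" by (rule Min_in[OF fA])
  then have "Min (l1len ` A) = l1len {P,Q} \<or> Min (l1len ` A) = l1len {Q,R} \<or> Min (l1len ` A) = l1len {P,R}"
    using A by auto
  then show ?thesis using mB c by auto
qed

lemma L_sets:
  assumes val: "\<forall>e\<in>\<sigma>. valid_edge vs e"
    and tA: "tri_of vs \<sigma> A" and tB: "tri_of vs \<sigma> B" and AB: "A \<noteq> B"
    and eA: "e \<in> A" and eB: "e \<in> B" and lg: "longest B e"
  shows "Min (l1len ` B) \<le> Min (l1len ` A)"
proof -
  obtain P Q R where e: "e = {P,Q}" and A: "A = {{P,Q},{Q,R},{P,R}}" and tU: "tri3 vs \<sigma> P Q R"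
    using tri_of_edge[OF tA eA] by blast
  obtain P' Q' S where e': "e = {P',Q'}" and B: "B = {{P',Q'},{Q',S},{P',S}}" and tL: "tri3 vs \<sigma> P' Q' S"
    using tri_of_edge[OF tB eB] by blast
  have "(P' = P \<and> Q' = Q) \<or> (P' = Q \<and> Q' = P)" using e e' by (auto simp: doubleton_eq_iff)
  then show ?thesis
  proof
    assume h: "P' = P \<and> Q' = Q"
    show ?thesis using L_core[OF val tU, of S A B] tL B A AB lg e h by simp
  next
    assume h: "P' = Q \<and> Q' = P"
    have tL': "tri3 vs \<sigma> P Q S" using tri3_perm1[OF tL] h by simp
    have B': "B = {{P,Q},{Q,S},{P,S}}"
      using B h set3_perm(4)[of Q P] set3_perm(2)[of "{P,Q}" "{P,S}" "{Q,S}"] by simp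
    show ?thesis using L_core[OF val tU tL' A B' AB] lg e by simp
  qed
qed

lemma infl_edge:
  assumes "(u,v) \<in> infl vs \<sigma> x"
    and F: "\<And>T. tri_of vs \<sigma> T \<Longrightarrow> edge_at \<sigma> x \<in> T \<Longrightarrow> longest T (edge_at \<sigma> x)"
  shows "\<exists>B f. tri_of vs \<sigma> B \<and> edge_at \<sigma> u \<in> B \<and> longest B (edge_at \<sigma> u) \<and> f \<in> B \<and> f \<noteq> edge_at \<sigma> u \<and> v = mid f"
  using assms(1)
proof cases
  case (root T f)
  then show ?thesis using F by blast
next
  case (step z T f)
  then show ?thesis by blast
qed

lemma not_longest_child:
  assumes "longest B g" "f \<in> B" "f \<noteq> g"
  shows "\<not> longest B f"
  using assms unfolding longest_def by force

lemma tree_claim: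
  assumes val: "\<forall>e\<in>\<sigma>. valid_edge vs e" and pd: "pairwise_disj \<sigma>"
    and F: "\<And>T. tri_of vs \<sigma> T \<Longrightarrow> edge_at \<sigma> x \<in> T \<Longrightarrow> longest T (edge_at \<sigma> x)"
    and t1: "tri_of vs \<sigma> T1" and y1: "edge_at \<sigma> y1 \<in> T1"
    and path: "(y1, v) \<in> (infl vs \<sigma> x)\<^sup>+"
  shows "\<exists>A. tri_of vs \<sigma> A \<and> edge_at \<sigma> v \<in> A \<and> \<not> longest A (edge_at \<sigma> v)
           \<and> Min (l1len ` A) \<le> Min (l1len ` T1)"
  using path
proof (induction rule: trancl_induct)
  case (base v)
  obtain B f where B: "tri_of vs \<sigma> B" "edge_at \<sigma> y1 \<in> B" "longest B (edge_at \<sigma> y1)" "f \<in> B"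
    "f \<noteq> edge_at \<sigma> y1" "v = mid f"
    using infl_edge[OF base F] by blast
  have ef: "edge_at \<sigma> v = f" using edge_at_mid[OF val pd] tri_of_sub[OF B(1)] B(4,6) by blast
  have m: "Min (l1len ` B) \<le> Min (l1len ` T1)"
  proof (cases "B = T1")
    case True then show ?thesis by simp
  next
    case False then show ?thesis using L_sets[OF val t1 B(1) _ y1 B(2,3)] by metis
  qed
  show ?case using B ef m not_longest_child[OF B(3,4,5)] by metis
next
  case (step v v')
  obtain A where A: "tri_of vs \<sigma> A" "edge_at \<sigma> v \<in> A" "\<not> longest A (edge_at \<sigma> v)"
      "Min (l1len ` A) \<le> Min (l1len ` T1)" using step.IH by blast
  obtain B f where B: "tri_of vs \<sigma> B" "edge_at \<sigma> v \<in> B" "longest B (edge_at \<sigma> v)" "f \<in> B"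
    "f \<noteq> edge_at \<sigma> v" "v' = mid f"
    using infl_edge[OF step.hyps(2) F] by blast
  have ef: "edge_at \<sigma> v' = f" using edge_at_mid[OF val pd] tri_of_sub[OF B(1)] B(4,6) by blast
  have AB: "A \<noteq> B" using A(3) B(3) by blast
  have "Min (l1len ` B) \<le> Min (l1len ` A)" using L_sets[OF val A(1) B(1) AB A(2) B(2,3)] .
  then have m: "Min (l1len ` B) \<le> Min (l1len ` T1)" using A(4) by linarith
  show ?case using B ef m not_longest_child[OF B(3,4,5)] by metis
qed

theorem mainTheorem5:
  fixes vs :: "lpt list" and \<xi> \<sigma> T1 T2 :: "lpt set set"
    and x y1 z1 w1 y2 z2 w2 :: "real \<times> real"
  assumes "lattice_polygon vs"
    and "boundary_condition vs \<xi>"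
    and "\<sigma> \<in> Omega vs \<xi>"
    and "x \<in> F_dec vs \<sigma> \<union> F_diag vs \<sigma>"
    and "tri_of vs \<sigma> T1" and "T1 = {edge_at \<sigma> y1, edge_at \<sigma> z1, edge_at \<sigma> w1}"
    and "l1len (edge_at \<sigma> y1) > l1len (edge_at \<sigma> z1)"
    and "l1len (edge_at \<sigma> z1) \<ge> l1len (edge_at \<sigma> w1)"
    and "tri_of vs \<sigma> T2" and "T2 = {edge_at \<sigma> y2, edge_at \<sigma> z2, edge_at \<sigma> w2}"
    and "l1len (edge_at \<sigma> y2) > l1len (edge_at \<sigma> z2)"
    and "l1len (edge_at \<sigma> z2) \<ge> l1len (edge_at \<sigma> w2)"
    and "{y1, z1, w1, y2, z2, w2} \<subseteq> infl_nodes vs \<sigma> x"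
    and "(y1, z1) \<in> infl vs \<sigma> x" and "(y1, w1) \<in> infl vs \<sigma> x"
    and "(y2, z2) \<in> infl vs \<sigma> x" and "(y2, w2) \<in> infl vs \<sigma> x"
    and "(y1, y2) \<in> (infl vs \<sigma> x)\<^sup>+"
  shows "l1len (edge_at \<sigma> w1) \<ge> l1len (edge_at \<sigma> w2)"
proof -
  have tr: "triangulation vs \<sigma>" using assms(3) unfolding Omega_def by simp
  have val: "\<forall>e\<in>\<sigma>. valid_edge vs e" and pd: "pairwise_disj \<sigma>"
    using tr unfolding triangulation_def by simp_all
  have F: "\<And>T. tri_of vs \<sigma> T \<Longrightarrow> edge_at \<sigma> x \<in> T \<Longrightarrow> longest T (edge_at \<sigma> x)"
    using assms(4) unfolding F_dec_def F_diag_def by blast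
  have y1: "edge_at \<sigma> y1 \<in> T1" using assms(6) by simp
  obtain A where A: "tri_of vs \<sigma> A" "edge_at \<sigma> y2 \<in> A" "\<not> longest A (edge_at \<sigma> y2)"
      "Min (l1len ` A) \<le> Min (l1len ` T1)"
    using tree_claim[OF val pd F assms(5) y1 assms(18)] by blast
  have y2: "edge_at \<sigma> y2 \<in> T2" using assms(10) by simp
  have lg2: "longest T2 (edge_at \<sigma> y2)"
    unfolding longest_def using y2 assms(10-12) by auto
  have AT: "A \<noteq> T2" using A(3) lg2 by blast
  have m: "Min (l1len ` T2) \<le> Min (l1len ` A)" using L_sets[OF val A(1) assms(9) AT A(2) y2 lg2] .
  have M1: "Min (l1len ` T1) = l1len (edge_at \<sigma> w1)" using assms(6-8) by simp
  have M2: "Min (l1len ` T2) = l1len (edge_at \<sigma> w2)" using assms(10-12) by simp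
  show ?thesis using m A(4) M1 M2 by linarith
qed

end
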